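(* Let $A \in \mathbb{R}^{m\times n}$, $B \in \mathbb{R}^{n\times m}$, nonzero $b\in\mathbb{R}^m$, $c\in\mathbb{R}^n$, $\lambda,\mu\in\mathbb{R}$, $K := \begin{bmatrix} \lambda I_m & A \\ B & \mu I_n\end{bmatrix}$, $d := (b,c) \in \mathbb{R}^{m+n}$ and $D := \begin{bmatrix} b & 0 \\ 0 & c\end{bmatrix} \in \mathbb{R}^{(m+n)\times 2}$. Let $k\ge 1$ and suppose the orthogonal Hessenberg reduction process (described in the context) runs without breakdown for $k-1$ steps. Then: (i) the column space of $W_k$ equals the block Krylov subspace $\mathcal{K}_k(K,D) := \operatorname{span}\{\text{columns of } D, KD, \ldots, K^{k-1}D\}$; (ii) $\mathcal{K}_k(K,d) := \operatorname{span}\{d, Kd, \ldots, K^{k-1}d\} \subseteq \mathcal{K}_k(K,D)$; (iii) consequently $\min_{z\in\mathbb{R}^{2k}} \|d - K W_k z\| \le \min_{x \in \mathcal{K}_k(K,d)} \|d - Kx\|$, i.e. the residual norm of the minimum-residual iterate over the column space of $W_k$ is at most the residual norm of the $k$-th \textsc{Gmres} iterate (with zero initial guess) for $Kx = d$.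
   Context: Orthogonal Hessenberg reduction process. Given $A \in \mathbb{R}^{m\times n}$, $B\in\mathbb{R}^{n\times m}$ and nonzero $b\in\mathbb{R}^m$, $c \in \mathbb{R}^n$: set $\beta = \|b\|$, $\gamma = \|c\|$, $v_1 = b/\beta$, $u_1 = c/\gamma$. For $k=1,2,\ldots$: for $i=1,\ldots,k$ set $h_{i,k} = v_i^T A u_k$ and $f_{i,k} = u_i^T B v_k$; set $q = A u_k - \sum_{i=1}^k h_{i,k} v_i$, $p = B v_k - \sum_{i=1}^k f_{i,k} u_i$, $h_{k+1,k} = \|q\|$, $f_{k+1,k} = \|p\|$, $v_{k+1} = q/h_{k+1,k}$, $u_{k+1} = p/f_{k+1,k}$. The process runs without breakdown for $k$ steps if $h_{j+1,j}>0$ and $f_{j+1,j}>0$ for $j=1,\ldots,k$. Norms are Euclidean. For $i \le k$ define $v_i^\circ := (v_i, 0) \in \mathbb{R}^{m+n}$ and $u_i^\circ := (0,u_i)\in\mathbb{R}^{m+n}$, and $W_k := \begin{bmatrix} v_1^\circ & u_1^\circ & v_2^\circ & u_2^\circ & \cdots & v_k^\circ & u_k^\circ\end{bmatrix} \in \mathbb{R}^{(m+n)\times 2k}$. *)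

theory Defs
  imports "HOL-Analysis.Analysis"
begin

primrec matpow :: "real^'a^'a \<Rightarrow> nat \<Rightarrow> real^'a^'a" where
  "matpow K 0 = mat 1"
| "matpow K (Suc j) = K ** matpow K j"

definition embl :: "real^'m \<Rightarrow> real^('m::finite + 'n::finite)" where
  "embl v = (\<chi> x. case x of Inl i \<Rightarrow> v $ i | Inr _ \<Rightarrow> 0)"

definition embr :: "real^'n \<Rightarrow> real^('m::finite + 'n::finite)" where
  "embr u = (\<chi> x. case x of Inl _ \<Rightarrow> 0 | Inr j \<Rightarrow> u $ j)"

definition blockK :: "real \<Rightarrow> real \<Rightarrow> real^'n^'m \<Rightarrow> real^'m^'n \<Rightarrow> real^('m+'n)^('m+'n)" where
  "blockK lam mu A B = (\<chi> r s. case (r, s) of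
      (Inl i, Inl j) \<Rightarrow> (if i = j then lam else 0)
    | (Inl i, Inr j) \<Rightarrow> A $ i $ j
    | (Inr i, Inl j) \<Rightarrow> B $ i $ j
    | (Inr i, Inr j) \<Rightarrow> (if i = j then mu else 0))"

definition ohr_q :: "real^'n^'m \<Rightarrow> (nat \<Rightarrow> real^'m) \<Rightarrow> (nat \<Rightarrow> real^'n) \<Rightarrow> nat \<Rightarrow> real^'m" where
  "ohr_q A V U k = A *v U k - (\<Sum>i=1..k. (V i \<bullet> (A *v U k)) *\<^sub>R V i)"

definition ohr_p :: "real^'m^'n \<Rightarrow> (nat \<Rightarrow> real^'m) \<Rightarrow> (nat \<Rightarrow> real^'n) \<Rightarrow> nat \<Rightarrow> real^'n" where
  "ohr_p B V U k = B *v V k - (\<Sum>i=1..k. (U i \<bullet> (B *v V k)) *\<^sub>R U i)"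

text \<open>ohr_basis A B b c j holds (V, U) with V i = v_i and U i = u_i valid for 1 \<le> i \<le> j+1,
  i.e. the state after j steps of the orthogonal Hessenberg reduction process.\<close>
primrec ohr_basis :: "real^'n^'m \<Rightarrow> real^'m^'n \<Rightarrow> real^'m \<Rightarrow> real^'n \<Rightarrow> nat
     \<Rightarrow> (nat \<Rightarrow> real^'m) \<times> (nat \<Rightarrow> real^'n)" where
  "ohr_basis A B b c 0 = ((\<lambda>_. (1 / norm b) *\<^sub>R b), (\<lambda>_. (1 / norm c) *\<^sub>R c))"
| "ohr_basis A B b c (Suc j) =
     (let V = fst (ohr_basis A B b c j); U = snd (ohr_basis A B b c j);
          q = ohr_q A V U (Suc j); p = ohr_p B V U (Suc j)
      in (V(Suc (Suc j) := (1 / norm q) *\<^sub>R q), U(Suc (Suc j) := (1 / norm p) *\<^sub>R p)))"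

definition ohr_v :: "real^'n^'m \<Rightarrow> real^'m^'n \<Rightarrow> real^'m \<Rightarrow> real^'n \<Rightarrow> nat \<Rightarrow> real^'m" where
  "ohr_v A B b c i = fst (ohr_basis A B b c (i - 1)) i"

definition ohr_u :: "real^'n^'m \<Rightarrow> real^'m^'n \<Rightarrow> real^'m \<Rightarrow> real^'n \<Rightarrow> nat \<Rightarrow> real^'n" where
  "ohr_u A B b c i = snd (ohr_basis A B b c (i - 1)) i"

definition ohr_hsub :: "real^'n^'m \<Rightarrow> real^'m^'n \<Rightarrow> real^'m \<Rightarrow> real^'n \<Rightarrow> nat \<Rightarrow> real" where
  "ohr_hsub A B b c k = norm (ohr_q A (fst (ohr_basis A B b c (k - 1))) (snd (ohr_basis A B b c (k - 1))) k)"

definition ohr_fsub :: "real^'n^'m \<Rightarrow> real^'m^'n \<Rightarrow> real^'m \<Rightarrow> real^'n \<Rightarrow> nat \<Rightarrow> real" where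
  "ohr_fsub A B b c k = norm (ohr_p B (fst (ohr_basis A B b c (k - 1))) (snd (ohr_basis A B b c (k - 1))) k)"

definition ohr_no_breakdown :: "real^'n^'m \<Rightarrow> real^'m^'n \<Rightarrow> real^'m \<Rightarrow> real^'n \<Rightarrow> nat \<Rightarrow> bool" where
  "ohr_no_breakdown A B b c k \<longleftrightarrow>
     (\<forall>j\<in>{1..k}. ohr_hsub A B b c j > 0 \<and> ohr_fsub A B b c j > 0)"

definition W_cols :: "real^'n^'m \<Rightarrow> real^'m^'n \<Rightarrow> real^'m \<Rightarrow> real^'n \<Rightarrow> nat \<Rightarrow> (real^('m+'n)) set" where
  "W_cols A B b c k = (\<lambda>i. embl (ohr_v A B b c i)) ` {1..k} \<union> (\<lambda>i. embr (ohr_u A B b c i)) ` {1..k}"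

text \<open>W_k z for z in R^{2k}, represented as z :: nat \<Rightarrow> real with entries z 1, ..., z (2k).\<close>
definition W_mul :: "real^'n^'m \<Rightarrow> real^'m^'n \<Rightarrow> real^'m \<Rightarrow> real^'n \<Rightarrow> nat \<Rightarrow> (nat \<Rightarrow> real) \<Rightarrow> real^('m+'n)" where
  "W_mul A B b c k z = (\<Sum>i=1..k. z (2*i - 1) *\<^sub>R embl (ohr_v A B b c i) + z (2*i) *\<^sub>R embr (ohr_u A B b c i))"

definition krylov :: "real^'a^'a \<Rightarrow> real^'a \<Rightarrow> nat \<Rightarrow> (real^'a) set" where
  "krylov K d k = span ((\<lambda>j. matpow K j *v d) ` {..<k})"

definition block_krylov :: "real^'a^'a \<Rightarrow> real^'a \<Rightarrow> real^'a \<Rightarrow> nat \<Rightarrow> (real^'a) set" where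
  "block_krylov K d1 d2 k = span ((\<lambda>j. matpow K j *v d1) ` {..<k} \<union> (\<lambda>j. matpow K j *v d2) ` {..<k})"

end

theory Submission imports Defs begin

lemma sum_UNIV_Plus:
  "(\<Sum>x\<in>(UNIV::('a::finite+'b::finite) set). f x) = (\<Sum>i\<in>UNIV. f (Inl i)) + (\<Sum>j\<in>UNIV. f (Inr j))"
  by (subst UNIV_Plus_UNIV[symmetric], subst sum.Plus) (simp_all add: comp_def)

lemma lin_embl: "linear (embl :: real^'m::finite \<Rightarrow> real^('m+'n::finite))"
  by (auto simp: linear_iff vec_eq_iff embl_def split: sum.split)

lemma lin_embr: "linear (embr :: real^'n::finite \<Rightarrow> real^('m::finite+'n))"
  by (auto simp: linear_iff vec_eq_iff embr_def split: sum.split)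

lemma sum_ifdelta: "(\<Sum>i\<in>(UNIV::'a::finite set). (if a = i then (l::real) else 0) * f i) = l * f a"
proof -
  have "(\<Sum>i\<in>(UNIV::'a set). (if a = i then l else 0) * f i) = (\<Sum>i\<in>UNIV. if a = i then l * f a else 0)"
    by (rule sum.cong) auto
  then show ?thesis by simp
qed

lemma K_embl: "blockK lam mu A B *v embl v = lam *\<^sub>R embl v + embr (B *v v)"
  unfolding vec_eq_iff
proof
  fix x show "(blockK lam mu A B *v embl v) $ x = (lam *\<^sub>R embl v + embr (B *v v)) $ x"
    by (cases x) (simp_all add: matrix_vector_mult_def blockK_def embl_def embr_def sum_UNIV_Plus sum_ifdelta)
qed

lemma K_embr: "blockK lam mu A B *v embr u = embl (A *v u) + mu *\<^sub>R embr u"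
  unfolding vec_eq_iff
proof
  fix x show "(blockK lam mu A B *v embr u) $ x = (embl (A *v u) + mu *\<^sub>R embr u) $ x"
    by (cases x) (simp_all add: matrix_vector_mult_def blockK_def embl_def embr_def sum_UNIV_Plus sum_ifdelta)
qed

lemma basis_stable: "1 \<le> i \<Longrightarrow> i \<le> Suc j \<Longrightarrow>
  fst (ohr_basis A B b c j) i = ohr_v A B b c i \<and> snd (ohr_basis A B b c j) i = ohr_u A B b c i"
proof (induction j arbitrary: i)
  case 0 then have "i = 1" by simp
  then show ?case by (simp add: ohr_v_def ohr_u_def)
next
  case (Suc j)
  show ?case
  proof (cases "i = Suc (Suc j)")
    case True then show ?thesis by (simp add: ohr_v_def ohr_u_def)
  next
    case False then have "i \<le> Suc j" using Suc.prems by simp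
    then show ?thesis using Suc.IH[of i] Suc.prems False by (simp add: Let_def)
  qed
qed

lemma v_step: assumes "1 \<le> k"
  shows "ohr_v A B b c (Suc k) = (1 / norm (ohr_q A (ohr_v A B b c) (ohr_u A B b c) k)) *\<^sub>R ohr_q A (ohr_v A B b c) (ohr_u A B b c) k
     \<and> ohr_u A B b c (Suc k) = (1 / norm (ohr_p B (ohr_v A B b c) (ohr_u A B b c) k)) *\<^sub>R ohr_p B (ohr_v A B b c) (ohr_u A B b c) k"
proof -
  obtain j where k: "k = Suc j" using assms by (cases k) auto
  have V: "fst (ohr_basis A B b c j) i = ohr_v A B b c i" and U: "snd (ohr_basis A B b c j) i = ohr_u A B b c i"
    if "i \<in> {1..k}" for i
    using basis_stable[of i j A B b c] k that by auto
  have Uk: "snd (ohr_basis A B b c j) k = ohr_u A B b c k" and Vk: "fst (ohr_basis A B b c j) k = ohr_v A B b c k"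
    using U V assms by auto
  have q: "ohr_q A (fst (ohr_basis A B b c j)) (snd (ohr_basis A B b c j)) k = ohr_q A (ohr_v A B b c) (ohr_u A B b c) k"
    unfolding ohr_q_def Uk using V by (auto intro!: sum.cong)
  have p: "ohr_p B (fst (ohr_basis A B b c j)) (snd (ohr_basis A B b c j)) k = ohr_p B (ohr_v A B b c) (ohr_u A B b c) k"
    unfolding ohr_p_def Vk using U by (auto intro!: sum.cong)
  show ?thesis using q p by (simp add: ohr_v_def ohr_u_def k Let_def)
qed


lemma embl_diff: "embl (x - y) = embl x - embl y" using linear_diff[OF lin_embl] by blast
lemma embl_scale: "embl (a *\<^sub>R x) = a *\<^sub>R embl x" using linear_scale[OF lin_embl] by blast
lemma embl_add: "embl (x + y) = embl x + embl y" using linear_add[OF lin_embl] by blast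
lemma embl_sum: "embl (sum f S) = (\<Sum>i\<in>S. embl (f i))" using linear_sum[OF lin_embl] by (simp add: comp_def)
lemma embr_diff: "embr (x - y) = embr x - embr y" using linear_diff[OF lin_embr] by blast
lemma embr_scale: "embr (a *\<^sub>R x) = a *\<^sub>R embr x" using linear_scale[OF lin_embr] by blast
lemma embr_add: "embr (x + y) = embr x + embr y" using linear_add[OF lin_embr] by blast
lemma embr_sum: "embr (sum f S) = (\<Sum>i\<in>S. embr (f i))" using linear_sum[OF lin_embr] by (simp add: comp_def)

lemma img_suc: assumes "1 \<le> k"
  shows "(\<lambda>j. matpow K j *v x) ` {..<Suc k} = (\<lambda>j. matpow K j *v x) ` {..<k} \<union> (*v) K ` ((\<lambda>j. matpow K j *v x) ` {..<k})"
proof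
  show "(\<lambda>j. matpow K j *v x) ` {..<Suc k} \<subseteq> (\<lambda>j. matpow K j *v x) ` {..<k} \<union> (*v) K ` ((\<lambda>j. matpow K j *v x) ` {..<k})"
  proof
    fix y assume "y \<in> (\<lambda>j. matpow K j *v x) ` {..<Suc k}"
    then obtain j where j: "j < Suc k" "y = matpow K j *v x" by auto
    show "y \<in> (\<lambda>j. matpow K j *v x) ` {..<k} \<union> (*v) K ` ((\<lambda>j. matpow K j *v x) ` {..<k})"
    proof (cases j)
      case 0 then show ?thesis using j assms by force
    next
      case (Suc i) then have "y = K *v (matpow K i *v x)" using j by (simp add: matrix_vector_mul_assoc)
      moreover have "i < k" using j Suc by simp
      ultimately show ?thesis by blast
    qed
  qed
next
  show "(\<lambda>j. matpow K j *v x) ` {..<k} \<union> (*v) K ` ((\<lambda>j. matpow K j *v x) ` {..<k}) \<subseteq> (\<lambda>j. matpow K j *v x) ` {..<Suc k}"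
  proof
    fix y assume "y \<in> (\<lambda>j. matpow K j *v x) ` {..<k} \<union> (*v) K ` ((\<lambda>j. matpow K j *v x) ` {..<k})"
    then consider (a) j where "j < k" "y = matpow K j *v x" | (b) j where "j < k" "y = K *v (matpow K j *v x)" by auto
    then show "y \<in> (\<lambda>j. matpow K j *v x) ` {..<Suc k}"
    proof cases
      case a then show ?thesis by auto
    next
      case b then have "y = matpow K (Suc j) *v x" by (simp add: matrix_vector_mul_assoc)
      then show ?thesis using b by (intro image_eqI[of _ _ "Suc j"]) auto
    qed
  qed
qed

lemma span_step: fixes K :: "real^'a^'a" assumes "span X = span Y"
  shows "span (X \<union> (*v) K ` X) \<subseteq> span (Y \<union> (*v) K ` Y)"
proof (rule span_minimal[OF _ subspace_span])
  have "X \<subseteq> span (Y \<union> (*v) K ` Y)"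
    using assms span_superset[of X] span_mono[of Y "Y \<union> (*v) K ` Y"] by auto
  moreover have "(*v) K ` X \<subseteq> span (Y \<union> (*v) K ` Y)"
  proof -
    have "(*v) K ` X \<subseteq> (*v) K ` span Y" using assms span_superset[of X] by (metis image_mono)
    also have "\<dots> = span ((*v) K ` Y)" by (rule span_linear_image[OF matrix_vector_mul_linear, symmetric])
    also have "\<dots> \<subseteq> span (Y \<union> (*v) K ` Y)" by (rule span_mono) auto
    finally show ?thesis .
  qed
  ultimately show "X \<union> (*v) K ` X \<subseteq> span (Y \<union> (*v) K ` Y)" by blast
qed

lemma W_step: assumes "1 \<le> k"
  shows "span (W_cols A B b c (Suc k)) = span (W_cols A B b c k \<union> (*v) (blockK lam mu A B) ` W_cols A B b c k)"
proof -
  let ?v = "ohr_v A B b c" and ?u = "ohr_u A B b c" and ?K = "blockK lam mu A B"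
  let ?G = "W_cols A B b c k" and ?G' = "W_cols A B b c (Suc k)"
  let ?S = "span (?G \<union> (*v) ?K ` ?G)"
  have inG: "embl (?v i) \<in> ?G" "embr (?u i) \<in> ?G" if "i \<in> {1..k}" for i
    using that by (auto simp: W_cols_def)
  have inG': "embl (?v i) \<in> ?G'" "embr (?u i) \<in> ?G'" if "i \<in> {1..Suc k}" for i
    using that by (auto simp: W_cols_def)
  have KinS: "?K *v x \<in> ?S" if "x \<in> ?G" for x using that by (intro span_base) blast
  have GinS: "x \<in> ?S" if "x \<in> ?G" for x using that by (intro span_base) blast
  have uk: "embr (?u k) \<in> ?G" "embl (?v k) \<in> ?G" using inG assms by auto
  have e1: "embl (?v (Suc k)) = (1 / norm (ohr_q A ?v ?u k)) *\<^sub>R ((?K *v embr (?u k) - mu *\<^sub>R embr (?u k))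
      - (\<Sum>i=1..k. (?v i \<bullet> (A *v ?u k)) *\<^sub>R embl (?v i)))"
    using v_step[OF assms, of A B b c] by (simp add: K_embr ohr_q_def embl_diff embl_scale embl_sum)
  have e2: "embr (?u (Suc k)) = (1 / norm (ohr_p B ?v ?u k)) *\<^sub>R ((?K *v embl (?v k) - lam *\<^sub>R embl (?v k))
      - (\<Sum>i=1..k. (?u i \<bullet> (B *v ?v k)) *\<^sub>R embr (?u i)))"
    using v_step[OF assms, of A B b c] by (simp add: K_embl ohr_p_def embr_diff embr_scale embr_sum)
  have "embl (?v (Suc k)) \<in> ?S" unfolding e1
    by (intro span_scale span_diff span_sum KinS GinS uk inG) auto
  moreover have "embr (?u (Suc k)) \<in> ?S" unfolding e2
    by (intro span_scale span_diff span_sum KinS GinS uk inG) auto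
  ultimately have s1: "?G' \<subseteq> ?S"
    using GinS inG by (auto simp: W_cols_def le_Suc_eq)
  have pnorm: "p = norm p *\<^sub>R ((1 / norm p) *\<^sub>R p)" for p :: "real^'z"
    by (cases "p = 0") auto
  have Bv: "B *v ?v i = norm (ohr_p B ?v ?u i) *\<^sub>R ?u (Suc i) + (\<Sum>l=1..i. (?u l \<bullet> (B *v ?v i)) *\<^sub>R ?u l)"
    if "1 \<le> i" for i
    using v_step[OF that, of A B b c] pnorm[of "ohr_p B ?v ?u i"] by (simp add: ohr_p_def)
  have Au: "A *v ?u i = norm (ohr_q A ?v ?u i) *\<^sub>R ?v (Suc i) + (\<Sum>l=1..i. (?v l \<bullet> (A *v ?u i)) *\<^sub>R ?v l)"
    if "1 \<le> i" for i
    using v_step[OF that, of A B b c] pnorm[of "ohr_q A ?v ?u i"] by (simp add: ohr_q_def)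
  have "?K *v x \<in> span ?G'" if "x \<in> ?G" for x
  proof -
    from that consider (l) i where "i \<in> {1..k}" "x = embl (?v i)" | (r) i where "i \<in> {1..k}" "x = embr (?u i)"
      by (auto simp: W_cols_def)
    then show ?thesis
    proof cases
      case l
      have "?K *v x = lam *\<^sub>R embl (?v i) + (norm (ohr_p B ?v ?u i) *\<^sub>R embr (?u (Suc i)) + (\<Sum>l=1..i. (?u l \<bullet> (B *v ?v i)) *\<^sub>R embr (?u l)))"
      proof -
        have i1: "1 \<le> i" using l(1) by simp
        have eq: "embr (B *v ?v i) = norm (ohr_p B ?v ?u i) *\<^sub>R embr (?u (Suc i)) + (\<Sum>l=1..i. (?u l \<bullet> (B *v ?v i)) *\<^sub>R embr (?u l))"
          using arg_cong[where f=embr, OF Bv[OF i1]] by (simp only: embr_add embr_scale embr_sum)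
        show ?thesis by (simp only: l(2) K_embl eq)
      qed
      also have "\<dots> \<in> span ?G'" using l
        by (intro span_add span_scale span_sum span_base inG') auto
      finally show ?thesis .
    next
      case r
      have "?K *v x = (norm (ohr_q A ?v ?u i) *\<^sub>R embl (?v (Suc i)) + (\<Sum>l=1..i. (?v l \<bullet> (A *v ?u i)) *\<^sub>R embl (?v l))) + mu *\<^sub>R embr (?u i)"
      proof -
        have i1: "1 \<le> i" using r(1) by simp
        have eq: "embl (A *v ?u i) = norm (ohr_q A ?v ?u i) *\<^sub>R embl (?v (Suc i)) + (\<Sum>l=1..i. (?v l \<bullet> (A *v ?u i)) *\<^sub>R embl (?v l))"
          using arg_cong[where f=embl, OF Au[OF i1]] by (simp only: embl_add embl_scale embl_sum)
        show ?thesis by (simp only: r(2) K_embr eq)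
      qed
      also have "\<dots> \<in> span ?G'" using r
        by (intro span_add span_scale span_sum span_base inG') auto
      finally show ?thesis .
    qed
  qed
  moreover have "?G \<subseteq> ?G'" by (auto simp: W_cols_def)
  ultimately have s2: "?G \<union> (*v) ?K ` ?G \<subseteq> span ?G'" using span_superset[of ?G'] by (auto simp del: W_cols_def)
  show ?thesis unfolding span_eq using s1 s2 by (rule conjI)
qed


lemma W_base: assumes "b \<noteq> 0" "c \<noteq> 0"
  shows "span (W_cols A B b c 1) = block_krylov K (embl b) (embr c) 1"
proof -
  have v1: "ohr_v A B b c 1 = (1 / norm b) *\<^sub>R b" and u1: "ohr_u A B b c 1 = (1 / norm c) *\<^sub>R c"
    by (simp_all add: ohr_v_def ohr_u_def)
  have W: "W_cols A B b c 1 = {(1 / norm b) *\<^sub>R embl b} \<union> {(1 / norm c) *\<^sub>R embr c}"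
    unfolding W_cols_def atLeastAtMost_singleton image_insert image_empty v1 u1 embl_scale embr_scale ..
  have G: "block_krylov K (embl b) (embr c) 1 = span ({embl b} \<union> {embr c})"
  proof -
    have "{..<1::nat} = {0}" by auto
    then show ?thesis unfolding block_krylov_def by simp
  qed
  have eb: "embl b = norm b *\<^sub>R ((1 / norm b) *\<^sub>R embl b)" using assms by simp
  have ec: "embr c = norm c *\<^sub>R ((1 / norm c) *\<^sub>R embr c)" using assms by simp
  have s1: "(1 / norm b) *\<^sub>R embl b \<in> span ({embl b} \<union> {embr c})"
    by (rule span_scale, rule span_base) simp
  have s2: "(1 / norm c) *\<^sub>R embr c \<in> span ({embl b} \<union> {embr c})"
    by (rule span_scale, rule span_base) simp
  have s3: "embl b \<in> span ({(1 / norm b) *\<^sub>R embl b} \<union> {(1 / norm c) *\<^sub>R embr c})"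
    by (subst eb, rule span_scale, rule span_base) simp
  have s4: "embr c \<in> span ({(1 / norm b) *\<^sub>R embl b} \<union> {(1 / norm c) *\<^sub>R embr c})"
    by (subst ec, rule span_scale, rule span_base) simp
  show ?thesis unfolding W G span_eq using s1 s2 s3 s4 by blast
qed

lemma W_mul_add: "W_mul A B b c k (\<lambda>i. z1 i + z2 i) = W_mul A B b c k z1 + W_mul A B b c k z2"
  by (simp add: W_mul_def scaleR_add_left sum.distrib algebra_simps)

lemma W_mul_scale: "W_mul A B b c k (\<lambda>i. a * z i) = a *\<^sub>R W_mul A B b c k z"
  by (simp add: W_mul_def scaleR_sum_right scaleR_add_right)

lemma W_mul_zero: "W_mul A B b c k (\<lambda>i. 0) = 0"
  by (simp add: W_mul_def)

lemma W_span_range: "span (W_cols A B b c k) \<subseteq> range (W_mul A B b c k)"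
proof (rule span_minimal)
  show "subspace (range (W_mul A B b c k))"
    unfolding subspace_def
  proof (intro conjI ballI allI)
    show "0 \<in> range (W_mul A B b c k)" using W_mul_zero[of A B b c k, symmetric] by blast
  next
    fix x y assume "x \<in> range (W_mul A B b c k)" "y \<in> range (W_mul A B b c k)"
    then obtain z1 z2 where "x = W_mul A B b c k z1" "y = W_mul A B b c k z2" by auto
    then show "x + y \<in> range (W_mul A B b c k)" using W_mul_add[of A B b c k z1 z2, symmetric] by blast
  next
    fix a :: real and x assume "x \<in> range (W_mul A B b c k)"
    then obtain z where "x = W_mul A B b c k z" by auto
    then show "a *\<^sub>R x \<in> range (W_mul A B b c k)" using W_mul_scale[of A B b c k a z, symmetric] by blast
  qed
next
  show "W_cols A B b c k \<subseteq> range (W_mul A B b c k)"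
  proof
    fix x assume "x \<in> W_cols A B b c k"
    then consider (l) i where "i \<in> {1..k}" "x = embl (ohr_v A B b c i)"
      | (r) i where "i \<in> {1..k}" "x = embr (ohr_u A B b c i)"
      by (auto simp: W_cols_def)
    then show "x \<in> range (W_mul A B b c k)"
    proof cases
      case l
      let ?z = "\<lambda>t. if t = 2*i - 1 then 1 else (0::real)"
      have "W_mul A B b c k ?z = (\<Sum>l=1..k. if l = i then embl (ohr_v A B b c i) else 0)"
        unfolding W_mul_def
      proof (rule sum.cong)
        fix l assume "l \<in> {1..k}"
        then show "?z (2*l - 1) *\<^sub>R embl (ohr_v A B b c l) + ?z (2*l) *\<^sub>R embr (ohr_u A B b c l)
           = (if l = i then embl (ohr_v A B b c i) else 0)"
        proof -
          have "2*l \<noteq> 2*i - 1" using l(1) by presburger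
          moreover have "2*l - 1 = 2*i - 1 \<longleftrightarrow> l = i" using l(1) \<open>l \<in> {1..k}\<close> by auto
          ultimately show ?thesis by auto
        qed
      qed simp
      also have "\<dots> = x" using l by simp
      finally show ?thesis by (metis rangeI)
    next
      case r
      let ?z = "\<lambda>t. if t = 2*i then 1 else (0::real)"
      have "W_mul A B b c k ?z = (\<Sum>l=1..k. if l = i then embr (ohr_u A B b c i) else 0)"
        unfolding W_mul_def
      proof (rule sum.cong)
        fix l assume "l \<in> {1..k}"
        then show "?z (2*l - 1) *\<^sub>R embl (ohr_v A B b c l) + ?z (2*l) *\<^sub>R embr (ohr_u A B b c l)
           = (if l = i then embr (ohr_u A B b c i) else 0)"
        proof -
          have "2*l - 1 \<noteq> 2*i" using r(1) \<open>l \<in> {1..k}\<close> by presburger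
          then show ?thesis by auto
        qed
      qed simp
      also have "\<dots> = x" using r by simp
      finally show ?thesis by (metis rangeI)
    qed
  qed
qed

theorem mainTheorem5:
  fixes A :: "real^'n::finite^'m::finite" and B :: "real^'m^'n"
    and b :: "real^'m" and c :: "real^'n" and lam mu :: real and k :: nat
  assumes "b \<noteq> 0" and "c \<noteq> 0" and "k \<ge> 1"
    and "ohr_no_breakdown A B b c (k - 1)"
  defines "K \<equiv> blockK lam mu A B"
    and "d \<equiv> embl b + embr c"
  shows "span (W_cols A B b c k) = block_krylov K (embl b) (embr c) k
         \<and> krylov K d k \<subseteq> block_krylov K (embl b) (embr c) k
         \<and> (INF z. norm (d - K *v W_mul A B b c k z)) \<le> (INF x\<in>krylov K d k. norm (d - K *v x))"
proof -
  let ?X = "\<lambda>n. (\<lambda>j. matpow K j *v embl b) ` {..<n}" and ?Y = "\<lambda>n. (\<lambda>j. matpow K j *v embr c) ` {..<n}"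
  have i: "span (W_cols A B b c n) = block_krylov K (embl b) (embr c) n" if "1 \<le> n" for n
    using that
  proof (induction n rule: nat_induct_at_least)
    case base then show ?case using W_base[OF assms(1,2)] by simp
  next
    case (Suc n)
    have gen: "?X (Suc n) \<union> ?Y (Suc n) = (?X n \<union> ?Y n) \<union> (*v) K ` (?X n \<union> ?Y n)"
      by (simp only: img_suc[OF Suc.hyps] image_Un Un_ac)
    have IH: "span (W_cols A B b c n) = span (?X n \<union> ?Y n)" using Suc.IH by (simp add: block_krylov_def)
    have "span (W_cols A B b c (Suc n)) = span (W_cols A B b c n \<union> (*v) K ` W_cols A B b c n)"
      unfolding K_def by (rule W_step[OF Suc.hyps])
    also have "\<dots> = span ((?X n \<union> ?Y n) \<union> (*v) K ` (?X n \<union> ?Y n))"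
      using span_step[OF IH, of K] span_step[OF IH[symmetric], of K] by (rule antisym)
    also have "\<dots> = block_krylov K (embl b) (embr c) (Suc n)"
      unfolding block_krylov_def gen ..
    finally show ?case .
  qed
  have ii: "krylov K d k \<subseteq> block_krylov K (embl b) (embr c) k"
    unfolding krylov_def
  proof (rule span_minimal)
    show "subspace (block_krylov K (embl b) (embr c) k)" unfolding block_krylov_def by (rule subspace_span)
    show "(\<lambda>j. matpow K j *v d) ` {..<k} \<subseteq> block_krylov K (embl b) (embr c) k"
    proof
      fix y assume "y \<in> (\<lambda>j. matpow K j *v d) ` {..<k}"
      then obtain j where j: "j < k" "y = matpow K j *v d" by auto
      then have "y = matpow K j *v embl b + matpow K j *v embr c"
        by (simp add: d_def matrix_vector_right_distrib)
      then show "y \<in> block_krylov K (embl b) (embr c) k"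
        unfolding block_krylov_def using j(1) by (metis (no_types, lifting) UnI1 UnI2 image_eqI lessThan_iff span_add span_base)
    qed
  qed
  have iii: "(INF z. norm (d - K *v W_mul A B b c k z)) \<le> (INF x\<in>krylov K d k. norm (d - K *v x))"
  proof (rule cINF_greatest)
    show "krylov K d k \<noteq> {}" unfolding krylov_def using span_zero by blast
  next
    fix x assume "x \<in> krylov K d k"
    then have "x \<in> span (W_cols A B b c k)" using ii i[OF assms(3)] by auto
    then obtain z where z: "x = W_mul A B b c k z" using W_span_range by blast
    have "bdd_below (range (\<lambda>z. norm (d - K *v W_mul A B b c k z)))"
      by (rule bdd_belowI[of _ 0]) auto
    then show "(INF z. norm (d - K *v W_mul A B b c k z)) \<le> norm (d - K *v x)"
      unfolding z by (rule cINF_lower) simp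
  qed
  show ?thesis using i[OF assms(3)] ii iii by blast
qed

end
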